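(* Let $k\ge 1$ and let $H_{2^k}$ be the Sylvester–Hadamard matrix of order $2^k$, with rows and columns indexed by $0,1,\ldots,2^k-1$; denote its $r$-th row by $H_{2^k}^{(r)}$. For an integer $j=\sum_{i=0}^{k-1}j_i2^i$ with $j_i\in\{0,1\}$ and $0\le j\le 2^k-1$, put $z_j=(j_0,j_1,\ldots,j_{k-1})\in\mathbb{F}_2^k$. Let $W=(w_0,w_1,\ldots,w_{2^k-1})$ with $w_i\in\{1,-1\}$ for all $i$. Then $W=\pm H_{2^k}^{(r)}$ for some $r\in\{0,\ldots,2^k-1\}$ if and only if for any four distinct integers $j,c,l,v\in\{0,\ldots,2^k-1\}$ with $z_j\oplus z_c\oplus z_l\oplus z_v=\mathbf{0}$ we have $w_jw_c=w_lw_v$.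
   Context: The Sylvester–Hadamard matrix is defined recursively by $H_1=(1)$, $H_2=\begin{pmatrix}1&1\\1&-1\end{pmatrix}$ and $H_{2^k}=\begin{pmatrix}H_{2^{k-1}}&H_{2^{k-1}}\\H_{2^{k-1}}&-H_{2^{k-1}}\end{pmatrix}$. Equivalently, $H_{2^k}^{(r)}=((-1)^{z_0\cdot z_r},(-1)^{z_1\cdot z_r},\ldots,(-1)^{z_{2^k-1}\cdot z_r})$, where $\cdot$ is the dot product on $\mathbb{F}_2^k$. *)

theory Defs
  imports Main
begin

text \<open>Sylvester--Hadamard matrix of order 2^k, entries indexed by r, c in {0..<2^k},
  defined by the block recursion H_{2^(k+1)} = [[H, H], [H, -H]].\<close>
fun sylvester :: "nat \<Rightarrow> nat \<Rightarrow> nat \<Rightarrow> int" where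
  "sylvester 0 r c = 1"
| "sylvester (Suc k) r c =
     (let h = sylvester k (r mod 2^k) (c mod 2^k)
      in if r \<ge> 2^k \<and> c \<ge> 2^k then - h else h)"

definition zvec :: "nat \<Rightarrow> nat \<Rightarrow> nat \<Rightarrow> bool" where
  "zvec k j i = (i < k \<and> odd (j div 2^i))"

end

theory Submission
  imports Defs
begin
definition B :: "nat \<Rightarrow> nat \<Rightarrow> nat set" where "B k j = {i. zvec k j i}"

lemma B_sub: "B k j \<subseteq> {..<k}" by (auto simp: B_def zvec_def)
lemma B_fin[simp]: "finite (B k j)" using B_sub finite_subset by blast

lemma par_symdiff:
  assumes "finite X" "finite Y"
  shows "(-1::int)^card ((X - Y) \<union> (Y - X)) = (-1)^card X * (-1)^card Y"
proof -
  have a: "card X = card (X - Y) + card (X \<inter> Y)"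
    using assms by (metis card_Diff_subset_Int card_mono le_add_diff_inverse2 Int_lower1 finite_Int)
  have b: "card Y = card (Y - X) + card (X \<inter> Y)"
    using assms by (metis card_Diff_subset_Int card_mono le_add_diff_inverse2 Int_lower2 finite_Int inf.commute)
  have c: "card ((X - Y) \<union> (Y - X)) = card (X - Y) + card (Y - X)"
    using assms by (simp add: card_Un_disjoint Diff_Int_distrib2 disjoint_iff)
  have sq: "((-1::int)^card (X \<inter> Y))^2 = 1" by (simp add: power_even_eq flip: power_mult)
  show ?thesis unfolding a b c using sq by (simp add: power_add power_mult_distrib)
qed

lemma B_inj: assumes "a < 2^k" "b < 2^k" "B k a = B k b" shows "a = b"
proof -
  have "bit a n = bit b n" for n
  proof (cases "n < k")
    case True
    then show ?thesis using assms(3) unfolding B_def zvec_def set_eq_iff bit_iff_odd by auto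
  next
    case False
    then have "2^k \<le> (2::nat)^n" by simp
    then have "a < 2^n" "b < 2^n" using assms by (auto intro: less_le_trans)
    then have "a div 2^n = 0" "b div 2^n = 0" by simp_all
    then show ?thesis by (simp add: bit_iff_odd)
  qed
  then show ?thesis by (simp add: bit_eq_iff)
qed

lemma B_surj: "B k ` {..<2^k} = Pow {..<k}"
proof (rule card_subset_eq)
  show "finite (Pow {..<k::nat})" by simp
  show "B k ` {..<2^k} \<subseteq> Pow {..<k}" using B_sub by auto
  have "inj_on (B k) {..<2^k}" by (auto intro: inj_onI B_inj)
  then show "card (B k ` {..<2^k}) = card (Pow {..<k})"
    by (simp add: card_image card_Pow)
qed

lemma B0[simp]: "B k 0 = {}" by (simp add: B_def zvec_def)

lemma B_Suc: assumes "r < 2^Suc k"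
  shows "B (Suc k) r = B k (r mod 2^k) \<union> (if r \<ge> 2^k then {k} else {})"
proof -
  have "r div 2^k < 2" using assms by (simp add: less_mult_imp_div_less mult.commute)
  moreover have "r \<ge> 2^k \<Longrightarrow> r div 2^k > 0" by (simp add: div_greater_zero_iff)
  moreover have "r < 2^k \<Longrightarrow> r div 2^k = 0" by simp
  ultimately have "r div 2^k = (if r \<ge> 2^k then 1 else 0)" by (cases "r \<ge> 2^k") auto
  then have k: "odd (r div 2^k) \<longleftrightarrow> r \<ge> 2^k" by simp
  have lo: "odd ((r mod 2^k) div 2^i) = odd (r div 2^i)" if "i < k" for i
    using that by (metis bit_iff_odd bit_take_bit_iff take_bit_eq_mod)
  show ?thesis unfolding B_def zvec_def using k lo by (auto simp: less_Suc_eq)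
qed

lemma syl: "r < 2^k \<Longrightarrow> c < 2^k \<Longrightarrow> sylvester k r c = (-1)^card (B k r \<inter> B k c)"
proof (induction k arbitrary: r c)
  case 0 then show ?case by (simp add: B_def zvec_def)
next
  case (Suc k)
  let ?r = "r mod 2^k" and ?c = "c mod 2^k"
  have ih: "sylvester k ?r ?c = (-1)^card (B k ?r \<inter> B k ?c)" by (rule Suc.IH) auto
  have kn: "k \<notin> B k ?r \<inter> B k ?c" by (auto simp: B_def zvec_def)
  have eq: "B (Suc k) r \<inter> B (Suc k) c = (B k ?r \<inter> B k ?c) \<union> (if r \<ge> 2^k \<and> c \<ge> 2^k then {k} else {})"
    using B_Suc[OF Suc.prems(1)] B_Suc[OF Suc.prems(2)] kn by (auto simp: B_def zvec_def)
  show ?case using ih kn unfolding eq by (auto simp: Let_def)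
qed

definition chi :: "nat set \<Rightarrow> nat set \<Rightarrow> int" where "chi R S = (-1)^card (R \<inter> S)"

lemma chi_mult: "finite S \<Longrightarrow> finite T \<Longrightarrow> chi R ((S - T) \<union> (T - S)) = chi R S * chi R T"
proof -
  assume f: "finite S" "finite T"
  have "R \<inter> ((S - T) \<union> (T - S)) = ((R \<inter> S) - (R \<inter> T)) \<union> ((R \<inter> T) - (R \<inter> S))" by auto
  then show ?thesis unfolding chi_def using par_symdiff[of "R \<inter> S" "R \<inter> T"] f by simp
qed

lemma prod_chi: "finite S \<Longrightarrow> (\<Prod>i\<in>S. (if i \<in> R then -1 else 1)) = chi R S"
proof (induction S rule: finite_induct)
  case empty then show ?case by (simp add: chi_def)
next
  case (insert x F)
  have "insert x F = ({x} - F) \<union> (F - {x})" using insert by auto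
  then have "chi R (insert x F) = chi R {x} * chi R F" using chi_mult[of "{x}" F R] insert by simp
  then show ?case using insert by (simp add: chi_def)
qed

theorem lemma1:
  fixes k :: nat and w :: "nat \<Rightarrow> int"
  assumes "k \<ge> 1"
    and "\<forall>i < 2^k. w i = 1 \<or> w i = -1"
  shows "(\<exists>r < 2^k. \<exists>s \<in> {1, -1::int}. \<forall>i < 2^k. w i = s * sylvester k r i)
     \<longleftrightarrow>
     (\<forall>j c l v. j < 2^k \<and> c < 2^k \<and> l < 2^k \<and> v < 2^k \<and>
        distinct [j, c, l, v] \<and>
        (\<forall>i < k. ((zvec k j i \<noteq> zvec k c i) \<noteq> (zvec k l i \<noteq> zvec k v i)) = False)
        \<longrightarrow> w j * w c = w l * w v)"
proof
  assume "\<exists>r < 2^k. \<exists>s \<in> {1, -1::int}. \<forall>i < 2^k. w i = s * sylvester k r i"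
  then obtain r s where r: "r < 2^k" and s: "s \<in> {1, -1::int}" and w: "\<forall>i < 2^k. w i = s * chi (B k r) (B k i)"
    using syl unfolding chi_def by metis
  have ss: "s * s = 1" using s by auto
  show "\<forall>j c l v. j < 2^k \<and> c < 2^k \<and> l < 2^k \<and> v < 2^k \<and>
        distinct [j, c, l, v] \<and>
        (\<forall>i < k. ((zvec k j i \<noteq> zvec k c i) \<noteq> (zvec k l i \<noteq> zvec k v i)) = False)
        \<longrightarrow> w j * w c = w l * w v"
  proof (intro allI impI)
    fix j c l v
    assume h: "j < 2^k \<and> c < 2^k \<and> l < 2^k \<and> v < 2^k \<and>
        distinct [j, c, l, v] \<and>
        (\<forall>i < k. ((zvec k j i \<noteq> zvec k c i) \<noteq> (zvec k l i \<noteq> zvec k v i)) = False)"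
    have e: "(B k j - B k c) \<union> (B k c - B k j) = (B k l - B k v) \<union> (B k v - B k l)"
      using h unfolding B_def zvec_def by auto
    have "w j * w c = (s*s) * (chi (B k r) (B k j) * chi (B k r) (B k c))" using w h by simp
    also have "\<dots> = chi (B k r) ((B k j - B k c) \<union> (B k c - B k j))" using ss chi_mult by simp
    also have "\<dots> = chi (B k r) ((B k l - B k v) \<union> (B k v - B k l))" using e by simp
    also have "\<dots> = (s*s) * (chi (B k r) (B k l) * chi (B k r) (B k v))" using ss chi_mult by simp
    also have "\<dots> = w l * w v" using w h by simp
    finally show "w j * w c = w l * w v" .
  qed
next
  assume H: "\<forall>j c l v. j < 2^k \<and> c < 2^k \<and> l < 2^k \<and> v < 2^k \<and>
        distinct [j, c, l, v] \<and>
        (\<forall>i < k. ((zvec k j i \<noteq> zvec k c i) \<noteq> (zvec k l i \<noteq> zvec k v i)) = False)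
        \<longrightarrow> w j * w c = w l * w v"
  have pm: "w i * w i = 1" if "i < 2^k" for i using assms(2) that by auto
  define N where "N S = (SOME x. x < 2^k \<and> B k x = S)" for S
  have N: "N S < 2^k \<and> B k (N S) = S" if "S \<subseteq> {..<k}" for S
  proof -
    have "S \<in> B k ` {..<2^k}" using B_surj that by auto
    then have "\<exists>x. x < 2^k \<and> B k x = S" by auto
    then show ?thesis unfolding N_def by (rule someI_ex)
  qed
  have NB: "N (B k x) = x" if "x < 2^k" for x using N[OF B_sub] B_inj that by blast
  define G where "G S = w 0 * w (N S)" for S
  have Gpm: "G S * G S = 1" if "S \<subseteq> {..<k}" for S
    using pm[of 0] pm[of "N S"] N[OF that] unfolding G_def by (simp add: algebra_simps)
  have Gm: "G ((S - T) \<union> (T - S)) = G S * G T" if "S \<subseteq> {..<k}" "T \<subseteq> {..<k}" for S T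
  proof (cases "S = {} \<or> T = {} \<or> S = T")
    case True
    have G0: "G {} = 1" unfolding G_def using NB[of 0] pm[of 0] by simp
    show ?thesis using True G0 Gpm that by auto
  next
    case False
    let ?D = "(S - T) \<union> (T - S)"
    have D: "?D \<subseteq> {..<k}" using that by auto
    have ne: "N X \<noteq> N Y" if "B k (N X) = X" "B k (N Y) = Y" "X \<noteq> Y" for X Y using that by metis
    have n0: "N X \<noteq> 0" if "B k (N X) = X" "X \<noteq> {}" for X using that B0[of k] by metis
    have "?D \<noteq> {}" "?D \<noteq> S" "?D \<noteq> T" using False by blast+
    then have dist: "distinct [0, N ?D, N S, N T]"
      using False N[OF D] N[OF that(1)] N[OF that(2)] ne n0 by simp
    have "\<forall>i < k. ((zvec k 0 i \<noteq> zvec k (N ?D) i) \<noteq> (zvec k (N S) i \<noteq> zvec k (N T) i)) = False"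
      using N[OF D] N[OF that(1)] N[OF that(2)] unfolding B_def zvec_def set_eq_iff by auto
    then have "w 0 * w (N ?D) = w (N S) * w (N T)"
      using H dist N[OF D] N[OF that(1)] N[OF that(2)] by auto
    then show ?thesis unfolding G_def using pm[of 0] by (simp add: algebra_simps)
  qed
  have Gprod: "G S = (\<Prod>i\<in>S. G {i})" if "S \<subseteq> {..<k}" for S
  proof -
    have "finite S" using that finite_subset by blast
    then show ?thesis using that
    proof (induction S rule: finite_induct)
      case empty then show ?case unfolding G_def using NB[of 0] pm[of 0] by simp
    next
      case (insert x F)
      have "insert x F = ({x} - F) \<union> (F - {x})" using insert by auto
      then have "G (insert x F) = G {x} * G F" using Gm[of "{x}" F] insert by simp
      then show ?case using insert by simp
    qed
  qed
  define R where "R = {i. i < k \<and> G {i} = -1}"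
  define r where "r = N R"
  have R: "R \<subseteq> {..<k}" unfolding R_def by auto
  have r: "r < 2^k" "B k r = R" using N[OF R] unfolding r_def by auto
  have Gi: "G {i} = (if i \<in> R then -1 else 1)" if "i < k" for i
  proof -
    have "G {i} * G {i} = 1" using Gpm that by auto
    then have "G {i} = 1 \<or> G {i} = -1" using zmult_eq_1_iff by (metis square_eq_1_iff)
    then show ?thesis unfolding R_def using that by auto
  qed
  show "\<exists>r < 2^k. \<exists>s \<in> {1, -1::int}. \<forall>i < 2^k. w i = s * sylvester k r i"
  proof (intro exI conjI bexI allI impI)
    show "r < 2^k" by (rule r)
    show "w 0 \<in> {1, -1}" using assms(2) by auto
    fix i assume i: "i < (2::nat)^k"
    have "G (B k i) = (\<Prod>j\<in>B k i. (if j \<in> R then -1 else 1))"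
    proof -
      have "\<forall>j\<in>B k i. G {j} = (if j \<in> R then -1 else 1)" using Gi B_sub[of k i] by auto
      then show ?thesis using Gprod[OF B_sub] by (auto intro!: prod.cong)
    qed
    also have "\<dots> = chi R (B k i)" by (rule prod_chi) simp
    finally have "w 0 * w i = chi R (B k i)" unfolding G_def NB[OF i] .
    then have "w i = w 0 * chi R (B k i)" using pm[of 0] by (metis mult.assoc mult_1 zero_less_numeral zero_less_power)
    then show "w i = w 0 * sylvester k r i" using syl[OF r(1) i] r(2) unfolding chi_def by (simp add: Int_commute)
  qed
qed
end
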